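(* Let $\mathcal{L}=\{L_1,L_2,\dots\}$ be a countably infinite collection of infinite languages such that $|L_a\cap L_b|<\infty$ for all $a\ne b$. Then for every $\varepsilon>0$ there is an online randomized identification algorithm (which may use the function $M(k)=\max_{1\le a<b\le k}|L_a\cap L_b|$, $M(1)=0$, and membership queries) that is $\varepsilon$-DP in the continual release model and that, for every $K\in\mathcal{L}$ and every enumeration of $K$ without repetitions, with probability $1$ outputs an index $i_n$ with $L_{i_n}=K$, and the same index, for all sufficiently large $n$.
   Context: $\mathcal{X}$ is a countable universe; a language is an infinite subset of $\mathcal{X}$. An enumeration of $K$ without repetitions is a sequence $x_1,x_2,\dots$ of pairwise distinct elements of $K$ in which every element of $K$ appears. An online randomized identification algorithm, after seeing $x_{1:n}$, outputs an index $i_n$ depending only on $x_{1:n}$ and internal randomness. Streams are neighboring if they differ at exactly one time step (arbitrary streams over $\mathcal{X}$, not necessarily enumerations); the algorithm is $\varepsilon$-DP in the continual release model if for all neighboring input streams $x,x'$ and every measurable set $E$ of entire output sequences, $\Pr[(i_n)_n(x)\in E]\le e^\varepsilon\Pr[(i_n)_n(x')\in E]$. *)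

theory Defs
  imports "HOL-Probability.Probability"
begin

text \<open>Streams are maps nat => 'a; position t (0-based) is time step t+1.
  The prefix x_{1:n+1} seen after n+1 steps.\<close>
definition prefix :: "(nat \<Rightarrow> 'a) \<Rightarrow> nat \<Rightarrow> 'a list" where
  "prefix x n = map x [0..<Suc n]"

definition neighboring :: "(nat \<Rightarrow> 'a) \<Rightarrow> (nat \<Rightarrow> 'a) \<Rightarrow> bool" where
  "neighboring x x' \<longleftrightarrow> (\<exists>t. x t \<noteq> x' t \<and> (\<forall>n. n \<noteq> t \<longrightarrow> x n = x' n))"

definition enumeration_of :: "(nat \<Rightarrow> 'a) \<Rightarrow> 'a set \<Rightarrow> bool" where
  "enumeration_of x K \<longleftrightarrow> inj x \<and> range x = K"

text \<open>Online randomized algorithm: A maps the prefix seen so far and the internal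
  randomness r (drawn from probability space R) to an index.\<close>
definition output_seq :: "('a list \<Rightarrow> 'r \<Rightarrow> nat) \<Rightarrow> (nat \<Rightarrow> 'a) \<Rightarrow> 'r \<Rightarrow> (nat \<Rightarrow> nat)" where
  "output_seq A x r = (\<lambda>n. A (prefix x n) r)"

abbreviation out_space :: "(nat \<Rightarrow> nat) measure" where
  "out_space \<equiv> PiM UNIV (\<lambda>_. count_space UNIV)"

definition online_randomized_alg :: "'r measure \<Rightarrow> ('a list \<Rightarrow> 'r \<Rightarrow> nat) \<Rightarrow> bool" where
  "online_randomized_alg R A \<longleftrightarrow> prob_space R \<and>
     (\<forall>xs. (\<lambda>r. A xs r) \<in> measurable R (count_space UNIV))"

definition dp_continual :: "real \<Rightarrow> 'r measure \<Rightarrow> ('a list \<Rightarrow> 'r \<Rightarrow> nat) \<Rightarrow> bool" where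
  "dp_continual \<epsilon> R A \<longleftrightarrow>
     (\<forall>x x' E. neighboring x x' \<longrightarrow> E \<in> sets out_space \<longrightarrow>
        measure (distr R out_space (output_seq A x)) E
          \<le> exp \<epsilon> * measure (distr R out_space (output_seq A x')) E)"

end

theory Submission
  imports Defs
begin


definition enc :: "nat \<Rightarrow> nat \<Rightarrow> nat" where "enc a m = prod_encode (a, m)"
definition Kq :: "nat \<Rightarrow> nat \<Rightarrow> nat" where "Kq len a = (LEAST m. len \<le> enc a m)"
definition yb :: "(nat \<Rightarrow> 'a set) \<Rightarrow> 'a list \<Rightarrow> (nat \<Rightarrow> real) \<Rightarrow> nat \<Rightarrow> bool" where
  "yb L xs r t = ((xs ! t \<in> L (fst (prod_decode t))) \<noteq> (r t = 1))"
definition Ysum :: "(nat \<Rightarrow> 'a set) \<Rightarrow> 'a list \<Rightarrow> (nat \<Rightarrow> real) \<Rightarrow> nat \<Rightarrow> real" where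
  "Ysum L xs r a = (\<Sum>m<Kq (length xs) a. of_bool (yb L xs r (enc a m)))"
definition pass :: "(nat \<Rightarrow> 'a set) \<Rightarrow> 'a list \<Rightarrow> (nat \<Rightarrow> real) \<Rightarrow> nat \<Rightarrow> bool" where
  "pass L xs r a = (real (Kq (length xs) a) < 2 * Ysum L xs r a)"
definition Alg :: "(nat \<Rightarrow> 'a set) \<Rightarrow> 'a list \<Rightarrow> (nat \<Rightarrow> real) \<Rightarrow> nat" where
  "Alg L xs r = (LEAST a. a = length xs \<or> (a < length xs \<and> pass L xs r a))"

lemma triangle_ge: "n \<le> triangle n"
  by (induct n) (simp_all add: triangle_Suc)

lemma enc_ge: "m \<le> enc a m"
  unfolding enc_def prod_encode_def using triangle_ge[of "a+m"] by simp

lemma enc_mono: "m' \<le> m \<Longrightarrow> enc a m' \<le> enc a m"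
  unfolding enc_def prod_encode_def triangle_def by (simp, intro add_mono div_le_mono mult_le_mono) simp_all

lemma enc_inj: "enc a m = enc a m' \<Longrightarrow> m = m'"
  unfolding enc_def using inj_prod_encode[of UNIV] by (auto simp: inj_on_def)

lemma enc_fst[simp]: "fst (prod_decode (enc a m)) = a"
  unfolding enc_def by simp

lemma Kq_ex: "\<exists>m. len \<le> enc a m"
  using enc_ge by blast

lemma Kq_less: "m < Kq len a \<Longrightarrow> enc a m < len"
  unfolding Kq_def using not_less_Least by (metis not_le)

lemma Kq_gt: "enc a m < len \<Longrightarrow> m < Kq len a"
proof (rule ccontr)
  assume "enc a m < len" "\<not> m < Kq len a"
  then have "enc a (Kq len a) \<le> enc a m" by (intro enc_mono) simp
  moreover have "len \<le> enc a (Kq len a)" unfolding Kq_def by (rule LeastI_ex[OF Kq_ex])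
  ultimately show False using \<open>enc a m < len\<close> by simp
qed

lemma Alg_cong:
  assumes "length xs = length xs'" "\<And>t. t < length xs \<Longrightarrow> yb L xs r t = yb L xs' r' t"
  shows "Alg L xs r = Alg L xs' r'"
proof -
  have "Ysum L xs r a = Ysum L xs' r' a" for a
    unfolding Ysum_def using assms Kq_less by (intro sum.cong) auto
  then have "pass L xs r a = pass L xs' r' a" for a unfolding pass_def using assms by simp
  then show ?thesis unfolding Alg_def using assms by simp
qed



definition pflip :: "real \<Rightarrow> real" where "pflip e = 1 / (1 + exp e)"
definition M0 :: "real \<Rightarrow> real measure" where
  "M0 e = measure_pmf (map_pmf (\<lambda>b. if b then 1 else 0) (bernoulli_pmf (pflip e)))"
definition RR :: "real \<Rightarrow> (nat \<Rightarrow> real) measure" where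
  "RR e = PiM UNIV (\<lambda>_. M0 e)"

lemma pflip_pos: "0 < pflip e" unfolding pflip_def by (simp add: add_pos_pos)
lemma pflip_lt1: "pflip e < 1" unfolding pflip_def by (simp add: add_pos_pos)
lemma pflip_half: "0 < e \<Longrightarrow> pflip e < 1/2"
  unfolding pflip_def by (simp add: divide_simps) (smt (verit) one_less_exp_iff)

lemma prob_M0: "prob_space (M0 e)" unfolding M0_def by (rule prob_space_measure_pmf)
lemma prob_RR: "prob_space (RR e)" unfolding RR_def by (intro prob_space_PiM prob_M0)

lemma sets_M0[simp]: "sets (M0 e) = UNIV" unfolding M0_def by simp
lemma space_M0[simp]: "space (M0 e) = UNIV" unfolding M0_def by simp
lemma space_RR[simp]: "space (RR e) = UNIV" unfolding RR_def by (simp add: space_PiM PiE_UNIV_domain)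

lemma coord_meas: "(\<lambda>r. r t) \<in> measurable (RR e) (count_space UNIV)"
proof -
  have "(\<lambda>r. r t) \<in> measurable (RR e) (M0 e)" unfolding RR_def by simp
  moreover have "sets (M0 e) = sets (count_space (UNIV::real set))" by simp
  ultimately show ?thesis using measurable_cong_sets[of "RR e" "RR e" "M0 e" "count_space UNIV"] by blast
qed

lemma flip_meas[measurable]: "Measurable.pred (RR e) (\<lambda>r. r t = 1)"
  using measurable_compose[OF coord_meas, of "\<lambda>v. v = (1::real)"] by simp

lemma Alg_meas: "(\<lambda>r. Alg L xs r) \<in> measurable (RR e) (count_space UNIV)"
proof -
  have [measurable]: "Measurable.pred (RR e) (\<lambda>r. yb L xs r t)" for t
    unfolding yb_def by measurable
  have [measurable]: "(\<lambda>r. Ysum L xs r a) \<in> borel_measurable (RR e)" for a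
    unfolding Ysum_def by measurable
  have [measurable]: "Measurable.pred (RR e) (\<lambda>r. pass L xs r a)" for a
    unfolding pass_def by measurable
  show ?thesis unfolding Alg_def by measurable
qed



lemma coord_indep: "prob_space.indep_vars (RR e) (\<lambda>_. M0 e) (\<lambda>m r. r m) UNIV"
proof -
  interpret prob_space "RR e" by (rule prob_RR)
  have rv: "random_variable (M0 e) (\<lambda>r. r i)" for i unfolding RR_def by simp
  have "distr (RR e) (\<Pi>\<^sub>M i\<in>UNIV. M0 e) (\<lambda>x. \<lambda>i\<in>UNIV. x i) = RR e"
  proof -
    have "distr (RR e) (\<Pi>\<^sub>M i\<in>UNIV. M0 e) (\<lambda>x. \<lambda>i\<in>UNIV. x i) = distr (RR e) (RR e) (\<lambda>x. x)"
      unfolding RR_def by (intro distr_cong) auto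
    then show ?thesis by simp
  qed
  moreover have "(\<Pi>\<^sub>M i\<in>UNIV. distr (RR e) (M0 e) (\<lambda>r. r i)) = RR e"
    unfolding RR_def by (intro PiM_cong refl distr_PiM_component prob_M0) auto
  ultimately show ?thesis
    by (subst indep_vars_iff_distr_eq_PiM[OF _ rv]) auto
qed

lemma Z_indep: "prob_space.indep_vars (RR e) (\<lambda>_. borel) (\<lambda>m r. of_bool (r m = 1) :: real) I"
proof -
  interpret prob_space "RR e" by (rule prob_RR)
  have "indep_vars (\<lambda>_. M0 e) (\<lambda>m r. r m) I"
    by (rule indep_vars_subset[OF coord_indep]) simp
  then have "indep_vars (\<lambda>_. borel) (\<lambda>m r. (\<lambda>v. of_bool (v = 1) :: real) (r m)) I"
    by (rule indep_vars_compose2) (simp add: M0_def)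
  then show ?thesis by simp
qed

lemma Z_distr: "distr (RR e) borel (\<lambda>r. of_bool (r m = 1) :: real) = distr (M0 e) borel (\<lambda>v. of_bool (v = 1))"
proof -
  have "distr (RR e) borel (\<lambda>r. of_bool (r m = 1) :: real) =
        distr (distr (RR e) (M0 e) (\<lambda>r. r m)) borel (\<lambda>v. of_bool (v = 1))"
    by (subst distr_distr) (auto simp: RR_def M0_def comp_def)
  also have "distr (RR e) (M0 e) (\<lambda>r. r m) = M0 e"
    unfolding RR_def by (intro distr_PiM_component prob_M0) auto
  finally show ?thesis .
qed

lemma Z_exp: "prob_space.expectation (RR e) (\<lambda>r. of_bool (r 0 = 1) :: real) = pflip e"
proof -
  have "prob_space.expectation (RR e) (\<lambda>r. of_bool (r 0 = 1) :: real) =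
       integral\<^sup>L (distr (RR e) borel (\<lambda>r. of_bool (r 0 = 1) :: real)) (\<lambda>x. x)"
    by (subst integral_distr) (auto simp: RR_def M0_def)
  also have "\<dots> = integral\<^sup>L (M0 e) (\<lambda>v. of_bool (v = 1) :: real)"
    by (subst Z_distr, subst integral_distr) (auto simp: M0_def)
  also have "\<dots> = pflip e"
    unfolding M0_def using pflip_pos[of e] pflip_lt1[of e] by simp
  finally show ?thesis .
qed

lemma hoeff:
  assumes d: "d \<ge> 0"
  shows "measure (RR e) {r. (\<Sum>m<Suc k. of_bool (r m = 1) :: real) / real (Suc k) \<ge> pflip e + d}
          \<le> exp (- 2 * real (Suc k) * d\<^sup>2)"
proof -
  interpret prob_space "RR e" by (rule prob_RR)
  interpret H: Hoeffding_ineq_iid "RR e" "{..<Suc k}" "\<lambda>m r. of_bool (r m = 1) :: real"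
    "\<lambda>r. of_bool (r 0 = 1) :: real" 0 1 "pflip e"
  proof unfold_locales
    show "indep_vars (\<lambda>_. borel) (\<lambda>m r. of_bool (r m = 1) :: real) {..<Suc k}" by (rule Z_indep)
    show "distr (RR e) borel (\<lambda>r. of_bool (r i = 1) :: real) = distr (RR e) borel (\<lambda>r. of_bool (r 0 = 1) :: real)" for i
      by (simp add: Z_distr)
    show "random_variable borel (\<lambda>r. of_bool (r 0 = 1) :: real)" by measurable
    show "AE x in RR e. of_bool (x 0 = 1) \<in> {0::real..1}" by simp
    show "pflip e \<equiv> expectation (\<lambda>r. of_bool (r 0 = 1) :: real)" by (simp add: Z_exp)
  qed simp
  have ne: "{..<Suc k} \<noteq> {}" by auto
  show ?thesis using H.Hoeffding_ineq_ge'[OF d zero_less_one ne]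
    by (simp only: space_RR card_lessThan UNIV_I simp_thms diff_zero power_one div_by_1)
qed



definition th :: "real \<Rightarrow> real" where "th e = pflip e + (1/2 - pflip e) / 2"

lemma th_lt: assumes "0 < e" shows "th e < 1/2" unfolding th_def using pflip_half[OF assms] by (simp add: field_simps)
lemma th_pos: assumes "0 < e" shows "0 < th e" unfolding th_def using pflip_half[OF assms] pflip_pos[of e] by (simp add: field_simps)

lemma flips_AE0:
  assumes e: "0 < e"
  shows "AE r in RR e. \<forall>\<^sub>F k in sequentially. (\<Sum>m<k. of_bool (r m = 1) :: real) < th e * real k"
proof -
  interpret prob_space "RR e" by (rule prob_RR)
  define d where "d = (1/2 - pflip e) / 2"
  have d: "d > 0" unfolding d_def using pflip_half[OF e] by simp
  define A where "A k = {r :: nat \<Rightarrow> real. (\<Sum>m<Suc k. of_bool (r m = 1) :: real) / real (Suc k) \<ge> pflip e + d}" for k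
  have Ameas: "A k \<in> sets (RR e)" for k
  proof -
    have "{r \<in> space (RR e). (\<Sum>m<Suc k. of_bool (r m = 1) :: real) / real (Suc k) \<ge> pflip e + d} \<in> sets (RR e)"
      by measurable
    then show ?thesis unfolding A_def by simp
  qed
  define q where "q = exp (- 2 * d\<^sup>2)"
  have q: "0 < q" "q < 1" unfolding q_def using d by auto
  have bound: "measure (RR e) (A k) \<le> q ^ Suc k" for k
  proof -
    have "measure (RR e) (A k) \<le> exp (- 2 * real (Suc k) * d\<^sup>2)"
      unfolding A_def by (rule hoeff) (use d in simp)
    also have "exp (- 2 * real (Suc k) * d\<^sup>2) = q ^ Suc k"
      unfolding q_def by (subst exp_of_nat_mult[symmetric]) (simp add: algebra_simps)
    finally show ?thesis .
  qed
  have "summable (\<lambda>k. q ^ Suc k)"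
    using summable_geometric[of q] q by (simp add: summable_mult)
  then have sum: "summable (\<lambda>k. measure (RR e) (A k))"
    by (rule summable_comparison_test') (use bound in auto)
  have "AE r in RR e. eventually (\<lambda>k. r \<in> space (RR e) - A k) sequentially"
    by (rule borel_cantelli_AE1[OF Ameas]) (auto simp: sum less_top[symmetric] emeasure_finite)
  then show ?thesis
  proof (rule AE_mp[OF _ AE_I2], intro impI)
    fix r assume "eventually (\<lambda>k. r \<in> space (RR e) - A k) sequentially"
    then have "eventually (\<lambda>k. (\<Sum>m<Suc k. of_bool (r m = 1) :: real) < th e * real (Suc k)) sequentially"
    proof (rule eventually_mono)
      fix k assume "r \<in> space (RR e) - A k"
      then have "(\<Sum>m<Suc k. of_bool (r m = 1) :: real) / real (Suc k) < th e"
        unfolding A_def th_def d_def by auto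
      then show "(\<Sum>m<Suc k. of_bool (r m = 1) :: real) < th e * real (Suc k)"
        by (simp add: divide_less_eq)
    qed
    then show "\<forall>\<^sub>F k in sequentially. (\<Sum>m<k. of_bool (r m = 1) :: real) < th e * real k"
      by (subst eventually_sequentially_Suc[symmetric])
  qed
qed

lemma flips_AE:
  assumes e: "0 < e"
  shows "AE r in RR e. \<forall>a. \<forall>\<^sub>F k in sequentially. (\<Sum>m<k. of_bool (r (enc a m) = 1) :: real) < th e * real k"
proof (subst AE_all_countable, intro allI)
  fix a
  define f where "f = (\<lambda>r::nat\<Rightarrow>real. \<lambda>m. r (enc a m))"
  have fm: "f \<in> measurable (RR e) (RR e)"
    unfolding f_def RR_def by (rule measurable_PiM_single') (auto simp: space_PiM)
  have deq: "distr (RR e) (RR e) f = RR e"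
  proof -
    have "distr (RR e) (\<Pi>\<^sub>M i\<in>UNIV. M0 e) (\<lambda>\<omega>. \<lambda>n\<in>UNIV. \<omega> (enc a n)) = (\<Pi>\<^sub>M i\<in>UNIV. M0 e)"
      unfolding RR_def using distr_PiM_reindex[of UNIV "\<lambda>_. M0 e" "enc a" UNIV] prob_M0
      by (auto simp: inj_on_def intro: enc_inj)
    moreover have "(\<lambda>\<omega>. \<lambda>n\<in>UNIV. \<omega> (enc a n)) = f" unfolding f_def by (auto simp: restrict_def)
    ultimately show ?thesis unfolding RR_def by simp
  qed
  then have "AE r in distr (RR e) (RR e) f. \<forall>\<^sub>F k in sequentially. (\<Sum>m<k. of_bool (r m = 1) :: real) < th e * real k"
    using flips_AE0[OF e] by (simp only: deq)
  from AE_distrD[OF fm this]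
  show "AE r in RR e. \<forall>\<^sub>F k in sequentially. (\<Sum>m<k. of_bool (r (enc a m) = 1) :: real) < th e * real k"
    unfolding f_def by simp
qed



lemma prefix_nth: "t < Suc n \<Longrightarrow> prefix x n ! t = x t"
  unfolding prefix_def by (simp del: upt_Suc add: nth_map)

lemma length_prefix[simp]: "length (prefix x n) = Suc n"
  unfolding prefix_def by simp

definition Yk :: "(nat \<Rightarrow> 'a set) \<Rightarrow> (nat \<Rightarrow> 'a) \<Rightarrow> (nat \<Rightarrow> real) \<Rightarrow> nat \<Rightarrow> nat \<Rightarrow> real" where
  "Yk L x r a k = (\<Sum>m<k. of_bool ((x (enc a m) \<in> L a) \<noteq> (r (enc a m) = 1)))"

lemma Ysum_prefix: "Ysum L (prefix x n) r a = Yk L x r a (Kq (Suc n) a)"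
  unfolding Ysum_def Yk_def yb_def
  by (intro sum.cong) (auto simp: prefix_nth Kq_less)

lemma Kq_tendsto: "filterlim (\<lambda>n. Kq (Suc n) a) at_top sequentially"
proof (subst filterlim_at_top, intro allI)
  fix Z
  show "\<forall>\<^sub>F n in sequentially. Z \<le> Kq (Suc n) a"
    using eventually_ge_at_top[of "enc a Z"]
  proof (rule eventually_mono)
    fix n assume "enc a Z \<le> n"
    then have "Z < Kq (Suc n) a" by (intro Kq_gt) simp
    then show "Z \<le> Kq (Suc n) a" by simp
  qed
qed

lemma ev_Kq: "\<forall>\<^sub>F k in sequentially. P k \<Longrightarrow> \<forall>\<^sub>F n in sequentially. P (Kq (Suc n) a)"
  using Kq_tendsto[of a] unfolding filterlim_iff by auto

lemma sum_ofbool_less: "(\<Sum>m<k. of_bool (m < N) :: real) \<le> real N"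
proof -
  have "(\<Sum>m<k. of_bool (m < N) :: real) = real (min k N)"
    by (induct k) (auto simp: min_def)
  then show ?thesis by simp
qed

lemma ident:
  assumes e: "0 < e" and fin: "\<And>a b. a \<noteq> b \<Longrightarrow> finite (L a \<inter> L b)"
    and x: "enumeration_of x (L i)"
    and good: "\<forall>a. \<forall>\<^sub>F k in sequentially. (\<Sum>m<k. of_bool (r (enc a m) = 1) :: real) < th e * real k"
  shows "\<forall>\<^sub>F n in sequentially. Alg L (prefix x n) r = i"
proof -
  let ?S = "\<lambda>a k. (\<Sum>m<k. of_bool (r (enc a m) = 1) :: real)"
  have injx: "inj x" and rx: "range x = L i" using x unfolding enumeration_of_def by auto
  have thl: "th e < 1/2" and thp: "0 < th e" using th_lt[OF e] th_pos[OF e] by auto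
  have ci: "\<forall>\<^sub>F k in sequentially. real k < 2 * Yk L x r i k"
    using good[rule_format, of i] eventually_ge_at_top[of 1]
  proof (eventually_elim)
    case (elim k)
    have "Yk L x r i k = (\<Sum>m<k. 1 - of_bool (r (enc i m) = 1))"
      unfolding Yk_def using rx by (intro sum.cong) auto
    also have "\<dots> = real k - ?S i k" by (simp add: sum_subtractf)
    finally have "Yk L x r i k = real k - ?S i k" .
    moreover have "th e * real k < real k / 2" using thl elim(2) by simp
    ultimately show ?case using elim(1) by simp
  qed
  have cw: "\<forall>\<^sub>F k in sequentially. \<not> real k < 2 * Yk L x r a k" if "a \<noteq> i" for a
  proof -
    have "finite {t. x t \<in> L a}"
    proof (rule finite_subset)
      show "{t. x t \<in> L a} \<subseteq> x -` (L a \<inter> L i)" using rx by auto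
      show "finite (x -` (L a \<inter> L i))" using fin[OF that] injx by (intro finite_vimageI) auto
    qed
    then obtain N where N: "{t. x t \<in> L a} \<subseteq> {..<N}" using finite_nat_bounded by blast
    have bnd: "Yk L x r a k \<le> real N + ?S a k" for k
    proof -
      have "Yk L x r a k \<le> (\<Sum>m<k. of_bool (m < N) + of_bool (r (enc a m) = 1))"
        unfolding Yk_def
      proof (intro sum_mono)
        fix m assume "m \<in> {..<k}"
        show "of_bool ((x (enc a m) \<in> L a) \<noteq> (r (enc a m) = 1)) \<le> (of_bool (m < N) + of_bool (r (enc a m) = 1) :: real)"
        proof (cases "m < N")
          case False
          then have "\<not> enc a m < N" using enc_ge[of m a] by simp
          then have "x (enc a m) \<notin> L a" using N by auto
          then show ?thesis by simp
        qed simp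
      qed
      also have "\<dots> = (\<Sum>m<k. of_bool (m < N) :: real) + ?S a k" by (simp add: sum.distrib)
      also have "\<dots> \<le> real N + ?S a k" by (rule add_right_mono[OF sum_ofbool_less])
      finally show ?thesis .
    qed
    obtain K0 :: nat where K0: "2 * real N / (1 - 2 * th e) \<le> real K0" using real_arch_simple by blast
    show ?thesis
      using good[rule_format, of a] eventually_ge_at_top[of K0]
    proof (eventually_elim)
      case (elim k)
      have pos: "0 < 1 - 2 * th e" using thl by simp
      have "2 * real N / (1 - 2 * th e) \<le> real k" using K0 elim(2) by simp
      then have "2 * real N \<le> real k * (1 - 2 * th e)" using pos by (simp add: divide_le_eq)
      then have "2 * Yk L x r a k \<le> real k" using bnd[of k] elim(1) by (simp add: algebra_simps)
      then show ?case by simp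
    qed
  qed
  have "\<forall>\<^sub>F n in sequentially. i \<le> n \<and> pass L (prefix x n) r i \<and> (\<forall>a\<in>{..<i}. \<not> pass L (prefix x n) r a)"
  proof (intro eventually_conj eventually_ball_finite ballI)
    show "\<forall>\<^sub>F n in sequentially. i \<le> n" by (rule eventually_ge_at_top)
    show "\<forall>\<^sub>F n in sequentially. pass L (prefix x n) r i"
      unfolding pass_def Ysum_prefix length_prefix by (rule ev_Kq[OF ci])
    fix a assume "a \<in> {..<i}"
    then have "a \<noteq> i" by simp
    show "\<forall>\<^sub>F n in sequentially. \<not> pass L (prefix x n) r a"
      unfolding pass_def Ysum_prefix length_prefix by (rule ev_Kq[OF cw[OF \<open>a \<noteq> i\<close>]])
  qed simp
  then show ?thesis
  proof (rule eventually_mono)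
    fix n assume n: "i \<le> n \<and> pass L (prefix x n) r i \<and> (\<forall>a\<in>{..<i}. \<not> pass L (prefix x n) r a)"
    show "Alg L (prefix x n) r = i"
      unfolding Alg_def length_prefix
    proof (rule Least_equality)
      show "i = Suc n \<or> i < Suc n \<and> pass L (prefix x n) r i" using n by simp
      fix y assume "y = Suc n \<or> y < Suc n \<and> pass L (prefix x n) r y"
      then show "i \<le> y" using n by (metis le_SucI lessThan_iff not_le)
    qed
  qed
qed



definition Rest :: "real \<Rightarrow> nat \<Rightarrow> (nat \<Rightarrow> real) measure" where
  "Rest e t0 = PiM (UNIV - {t0}) (\<lambda>_. M0 e)"

lemma prob_Rest: "prob_space (Rest e t0)"
  unfolding Rest_def by (intro prob_space_PiM prob_M0)

lemma decomp:
  assumes F: "F \<in> sets (RR e)"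
  shows "emeasure (RR e) F = (\<integral>\<^sup>+ a. emeasure (Rest e t0) {X \<in> space (Rest e t0). X(t0 := a) \<in> F} \<partial>M0 e)"
proof -
  interpret R: prob_space "Rest e t0" by (rule prob_Rest)
  define \<Phi> where "\<Phi> = (\<lambda>p :: real \<times> (nat \<Rightarrow> real). (snd p)(t0 := fst p))"
  have "distr (M0 e \<Otimes>\<^sub>M (\<Pi>\<^sub>M i\<in>UNIV - {t0}. M0 e)) (\<Pi>\<^sub>M i\<in>insert t0 (UNIV - {t0}). M0 e) (\<lambda>(x, X). X(t0 := x)) =
    (\<Pi>\<^sub>M i\<in>insert t0 (UNIV - {t0}). M0 e)"
    by (rule distr_pair_PiM_eq_PiM) (auto simp: prob_M0)
  moreover have "(\<lambda>(x, X). X(t0 := x)) = \<Phi>" unfolding \<Phi>_def by auto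
  ultimately have D: "distr (M0 e \<Otimes>\<^sub>M Rest e t0) (RR e) \<Phi> = RR e"
    unfolding RR_def Rest_def by simp
  have \<Phi>m: "\<Phi> \<in> measurable (M0 e \<Otimes>\<^sub>M Rest e t0) (RR e)"
    unfolding \<Phi>_def RR_def Rest_def
    by (rule measurable_fun_upd[where J="UNIV - {t0}"]) auto
  have "emeasure (RR e) F = emeasure (M0 e \<Otimes>\<^sub>M Rest e t0) (\<Phi> -` F \<inter> space (M0 e \<Otimes>\<^sub>M Rest e t0))"
    by (subst D[symmetric], rule emeasure_distr[OF \<Phi>m]) (simp add: F)
  also have "\<dots> = (\<integral>\<^sup>+ a. emeasure (Rest e t0) (Pair a -` (\<Phi> -` F \<inter> space (M0 e \<Otimes>\<^sub>M Rest e t0))) \<partial>M0 e)"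
    by (rule R.emeasure_pair_measure_alt) (rule measurable_sets[OF \<Phi>m F])
  also have "\<dots> = (\<integral>\<^sup>+ a. emeasure (Rest e t0) {X \<in> space (Rest e t0). X(t0 := a) \<in> F} \<partial>M0 e)"
    by (intro nn_integral_cong arg_cong2[where f=emeasure] refl) (auto simp: \<Phi>_def space_pair_measure)
  finally show ?thesis .
qed

lemma int_M0: "(\<integral>\<^sup>+ a. h a \<partial>M0 e) = ennreal (pflip e) * h 1 + ennreal (1 - pflip e) * h 0"
  unfolding M0_def using pflip_pos[of e] pflip_lt1[of e]
  by (simp add: mult.commute)

lemma out_meas: "output_seq (Alg L) z \<in> measurable (RR e) out_space"
  unfolding output_seq_def
  by (rule measurable_PiM_single') (auto simp: Alg_meas)

lemma out_swap:
  assumes t0: "\<And>n. n \<noteq> t0 \<Longrightarrow> x n = x' n"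
    and b: "(x t0 \<in> L (fst (prod_decode t0))) \<noteq> (x' t0 \<in> L (fst (prod_decode t0)))"
    and r: "(r t0 = 1) \<noteq> (r' t0 = 1)" "\<And>t. t \<noteq> t0 \<Longrightarrow> r t = r' t"
  shows "output_seq (Alg L) x r = output_seq (Alg L) x' r'"
  unfolding output_seq_def
proof (rule ext, rule Alg_cong)
  fix n t assume "t < length (prefix x n)"
  then have "t < Suc n" by simp
  then show "yb L (prefix x n) r t = yb L (prefix x' n) r' t"
    unfolding yb_def prefix_nth[OF \<open>t < Suc n\<close>] using t0 b r by (cases "t = t0") auto
qed simp

lemma out_same:
  assumes t0: "\<And>n. n \<noteq> t0 \<Longrightarrow> x n = x' n"
    and b: "(x t0 \<in> L (fst (prod_decode t0))) = (x' t0 \<in> L (fst (prod_decode t0)))"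
  shows "output_seq (Alg L) x = output_seq (Alg L) x'"
  unfolding output_seq_def
proof (rule ext, rule ext, rule Alg_cong)
  fix r n t assume "t < length (prefix x n)"
  then have "t < Suc n" by simp
  then show "yb L (prefix x n) r t = yb L (prefix x' n) r t"
    unfolding yb_def prefix_nth[OF \<open>t < Suc n\<close>] using t0 b by (cases "t = t0") auto
qed simp

lemma dp:
  assumes e: "0 < e"
  shows "dp_continual e (RR e) (Alg L)"
  unfolding dp_continual_def
proof (intro allI impI)
  fix x x' :: "nat \<Rightarrow> 'a" and E
  assume nb: "neighboring x x'" and E: "E \<in> sets out_space"
  interpret P: prob_space "RR e" by (rule prob_RR)
  obtain t0 where t0: "x t0 \<noteq> x' t0" "\<And>n. n \<noteq> t0 \<Longrightarrow> x n = x' n"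
    using nb unfolding neighboring_def by blast
  define F where "F z = output_seq (Alg L) z -` E" for z
  have meq: "measure (distr (RR e) out_space (output_seq (Alg L) z)) E = measure (RR e) (F z)" for z
    unfolding F_def by (subst measure_distr[OF out_meas E]) simp
  have Fm: "F z \<in> sets (RR e)" for z
    using measurable_sets[OF out_meas E] unfolding F_def by simp
  have ge1: "1 \<le> exp e" using e by simp
  show "measure (distr (RR e) out_space (output_seq (Alg L) x)) E
          \<le> exp e * measure (distr (RR e) out_space (output_seq (Alg L) x')) E"
  proof (cases "(x t0 \<in> L (fst (prod_decode t0))) = (x' t0 \<in> L (fst (prod_decode t0)))")
    case True
    have "output_seq (Alg L) x = output_seq (Alg L) x'" by (rule out_same[of t0 x x' L]) (use t0 True in auto)
    then show ?thesis using ge1 by (simp add: mult_le_cancel_right1)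
  next
    case False
    define h where "h z a = emeasure (Rest e t0) {X \<in> space (Rest e t0). X(t0 := a) \<in> F z}" for z a
    have swap: "output_seq (Alg L) x (X(t0 := a)) = output_seq (Alg L) x' (X(t0 := a'))"
      if "(a = 1) \<noteq> (a' = 1)" for X a a'
      by (rule out_swap[of t0 x x' L]) (use that t0 False in auto)
    have h1: "h x 1 = h x' 0" unfolding h_def F_def using swap[of 1 0] by simp
    have h0: "h x 0 = h x' 1" unfolding h_def F_def using swap[of 0 1] by simp
    define p where "p = pflip e"
    have p: "0 < p" "p < 1/2" using pflip_pos pflip_half[OF e] unfolding p_def by auto
    have pos: "0 < 1 + exp e" by (simp add: add_pos_pos)
    have peq: "1 - p = exp e * p" unfolding p_def pflip_def using pos by (simp add: field_simps)
    have "1 * (1 - p) \<le> exp e * (1 - p)" by (rule mult_right_mono) (use ge1 p in auto)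
    then have "1 - p \<le> exp e * (1 - p)" by (simp only: mult_1)
    then have ple: "p \<le> exp e * (1 - p)" using p by linarith
    have "emeasure (RR e) (F x) = ennreal p * h x 1 + ennreal (1 - p) * h x 0"
      unfolding decomp[OF Fm, of _ t0] int_M0 p_def h_def ..
    then have ex: "emeasure (RR e) (F x) = ennreal p * h x' 0 + ennreal (1 - p) * h x' 1"
      by (simp only: h1 h0)
    have ex': "emeasure (RR e) (F x') = ennreal p * h x' 1 + ennreal (1 - p) * h x' 0"
      unfolding decomp[OF Fm, of _ t0] int_M0 p_def h_def ..
    have "ennreal p * h x' 0 + ennreal (1 - p) * h x' 1
         \<le> ennreal (exp e * (1 - p)) * h x' 0 + ennreal (exp e * p) * h x' 1"
    proof (rule add_mono)
      show "ennreal p * h x' 0 \<le> ennreal (exp e * (1 - p)) * h x' 0"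
        by (rule mult_right_mono[OF ennreal_leI[OF ple]]) simp
      show "ennreal (1 - p) * h x' 1 \<le> ennreal (exp e * p) * h x' 1"
        by (simp only: peq)
    qed
    also have "\<dots> = ennreal (exp e) * (ennreal p * h x' 1 + ennreal (1 - p) * h x' 0)"
    proof -
      have m1: "ennreal (exp e * (1 - p)) = ennreal (exp e) * ennreal (1 - p)"
        by (rule ennreal_mult) (use p in auto)
      have m2: "ennreal (exp e * p) = ennreal (exp e) * ennreal p"
        by (rule ennreal_mult) (use p in auto)
      show ?thesis unfolding m1 m2 by (simp only: distrib_left mult.assoc add.commute)
    qed
    finally have "emeasure (RR e) (F x) \<le> ennreal (exp e) * emeasure (RR e) (F x')"
      unfolding ex ex' .
    then have "ennreal (measure (RR e) (F x)) \<le> ennreal (exp e * measure (RR e) (F x'))"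
      by (simp add: P.emeasure_eq_measure ennreal_mult)
    then have "measure (RR e) (F x) \<le> exp e * measure (RR e) (F x')"
      by (subst (asm) ennreal_le_iff) auto
    then show ?thesis unfolding meq .
  qed
qed


theorem theoremD3:
  fixes L :: "nat \<Rightarrow> 'a::countable set" and \<epsilon> :: real
  assumes infinite_langs: "\<And>a. infinite (L a)"
    and finite_inter: "\<And>a b. a \<noteq> b \<Longrightarrow> finite (L a \<inter> L b)"
    and eps_pos: "\<epsilon> > 0"
  shows "\<exists>(R :: (nat \<Rightarrow> real) measure) (A :: 'a list \<Rightarrow> (nat \<Rightarrow> real) \<Rightarrow> nat).
           online_randomized_alg R A \<and> dp_continual \<epsilon> R A \<and>
           (\<forall>K \<in> range L. \<forall>x. enumeration_of x K \<longrightarrow>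
              (AE r in R. \<exists>i. L i = K \<and> (\<forall>\<^sub>F n in sequentially. A (prefix x n) r = i)))"
proof (intro exI conjI)
  show "online_randomized_alg (RR \<epsilon>) (Alg L)"
    unfolding online_randomized_alg_def using prob_RR Alg_meas by blast
  show "dp_continual \<epsilon> (RR \<epsilon>) (Alg L)" by (rule dp[OF eps_pos])
  show "\<forall>K \<in> range L. \<forall>x. enumeration_of x K \<longrightarrow>
          (AE r in RR \<epsilon>. \<exists>i. L i = K \<and> (\<forall>\<^sub>F n in sequentially. Alg L (prefix x n) r = i))"
  proof (intro ballI allI impI)
    fix K x assume "K \<in> range L" and x: "enumeration_of x K"
    then obtain i where i: "K = L i" by blast
    show "AE r in RR \<epsilon>. \<exists>i. L i = K \<and> (\<forall>\<^sub>F n in sequentially. Alg L (prefix x n) r = i)"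
      using flips_AE[OF eps_pos]
    proof (rule AE_mp[OF _ AE_I2], intro impI)
      fix r :: "nat \<Rightarrow> real" assume g: "\<forall>a. \<forall>\<^sub>F k in sequentially. (\<Sum>m<k. of_bool (r (enc a m) = 1) :: real) < th \<epsilon> * real k"
      have xi: "enumeration_of x (L i)" using x i by simp
      have "\<forall>\<^sub>F n in sequentially. Alg L (prefix x n) r = i"
        by (rule ident[where L=L, OF eps_pos finite_inter xi g])
      then show "\<exists>i. L i = K \<and> (\<forall>\<^sub>F n in sequentially. Alg L (prefix x n) r = i)"
        using i by blast
    qed
  qed
qed

end
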